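(* Let $D$ be a positive squarefree integer with $N(\varepsilon)=-1$, and let $\ell=4$ if $D\equiv1\bmod4$ and $\ell=1$ otherwise. Then for $\operatorname{Re}s>0$, \[ Z_D^{\mathrm{odd}}(s)=\frac14\sum_{n\ge1}\frac{r_1(n)\,r_1(Dn-\ell)}{n^{s/2}},\qquad Z_D^{\mathrm{even}}(s)=\frac14\sum_{n\ge1}\frac{r_1(n)\,r_1(Dn+\ell)}{n^{s/2}}. \]
   Context: $r_1(n)=\#\{x\in\mathbb{Z}:x^2=n\}$ (so $r_1(n)=0$ for negative $n$). $\mathcal{O}_D$ is the ring of integers of $\mathbb{Q}(\sqrt D)\subset\mathbb{R}$, $\varepsilon>1$ its fundamental unit, $\overline{\varepsilon}$ its conjugate, $N$ the norm. $q=D$ if $D\equiv1\bmod4$, else $q=4D$. $F_D(n)=(\varepsilon^n-\overline{\varepsilon}^{\,n})/\sqrt q$. $Z_D^{\mathrm{odd}}(s)=\sum_{n\ge1}F_D(2n-1)^{-s}$ and $Z_D^{\mathrm{even}}(s)=\sum_{n\ge1}F_D(2n)^{-s}$. *)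

theory Defs
  imports "HOL-Analysis.Analysis" "HOL-Computational_Algebra.Squarefree"
begin

definition r1 :: "int \<Rightarrow> nat" where
  "r1 n = card {x::int. x ^ 2 = n}"

text \<open>Elements of the ring of integers O_D of Q(sqrt D), viewed as real numbers:
  (a + b sqrt D)/2 with a, b integers, a = b mod 2 if D = 1 mod 4, a, b even otherwise.\<close>
definition in_OD :: "int \<Rightarrow> real \<Rightarrow> bool" where
  "in_OD D x \<longleftrightarrow> (\<exists>a b :: int. x = (of_int a + of_int b * sqrt (of_int D)) / 2 \<and>
      (if D mod 4 = 1 then a mod 2 = b mod 2 else even a \<and> even b))"

definition qconj :: "int \<Rightarrow> real \<Rightarrow> real" where
  "qconj D x = (THE y. \<exists>a b :: rat. x = of_rat a + of_rat b * sqrt (of_int D) \<and>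
                                    y = of_rat a - of_rat b * sqrt (of_int D))"

definition qnorm :: "int \<Rightarrow> real \<Rightarrow> real" where
  "qnorm D x = x * qconj D x"

definition unit_OD :: "int \<Rightarrow> real \<Rightarrow> bool" where
  "unit_OD D x \<longleftrightarrow> in_OD D x \<and> in_OD D (inverse x) \<and> x \<noteq> 0"

definition fund_unit :: "int \<Rightarrow> real" where
  "fund_unit D = (LEAST x. unit_OD D x \<and> x > 1)"

definition qD :: "int \<Rightarrow> int" where
  "qD D = (if D mod 4 = 1 then D else 4 * D)"

definition F_D :: "int \<Rightarrow> nat \<Rightarrow> real" where
  "F_D D n = (fund_unit D ^ n - qconj D (fund_unit D) ^ n) / sqrt (of_int (qD D))"

definition Z_odd :: "int \<Rightarrow> complex \<Rightarrow> complex" where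
  "Z_odd D s = (\<Sum>n. complex_of_real (F_D D (2 * Suc n - 1)) powr (- s))"

definition Z_even :: "int \<Rightarrow> complex \<Rightarrow> complex" where
  "Z_even D s = (\<Sum>n. complex_of_real (F_D D (2 * Suc n)) powr (- s))"

end

theory Submission
  imports Defs
begin


lemma sqrt_irr:
  fixes D :: int assumes D1: "D > 1" and sqf: "squarefree D"
  shows "sqrt (real_of_int D) \<notin> \<rat>"
proof
  assume "sqrt (real_of_int D) \<in> \<rat>"
  then obtain m n :: nat where n: "n \<noteq> 0" and e: "\<bar>sqrt (real_of_int D)\<bar> = real m / real n"
    and cp: "coprime m n" by (rule Rats_abs_nat_div_natE)
  have "\<bar>sqrt (real_of_int D)\<bar> = sqrt (real_of_int D)" using D1 by simp
  hence "sqrt (real_of_int D) * real n = real m" using e n by (simp add: field_simps)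
  hence "(sqrt (real_of_int D) * real n)^2 = real m ^ 2" by simp
  hence "real_of_int D * real n ^ 2 = real m ^ 2" using D1 by (simp add: power_mult_distrib)
  hence eq: "D * int n ^ 2 = int m ^ 2" by (metis of_int_eq_iff of_int_mult of_int_of_nat_eq of_int_power)
  hence "int n ^ 2 dvd int m ^ 2" by (metis dvd_triv_right)
  hence "n ^ 2 dvd m ^ 2" by (metis of_nat_dvd_iff of_nat_power)
  hence "n dvd m" by simp
  with cp have "n = 1" by (metis coprime_common_divisor_nat dvd_refl n nat_dvd_1_iff_1)
  with eq have "D = int m ^ 2" by simp
  with sqf have "is_unit (int m)" using squarefree_power_iff[of "int m" 2] by auto
  with \<open>D = int m ^ 2\<close> D1 show False by auto
qed

context fixes D :: int assumes D1: "D > 1" and sqf: "squarefree D"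
begin

abbreviation "th \<equiv> sqrt (real_of_int D)"

lemma th_sq: "th * th = real_of_int D" using D1 by simp
lemma th_gt1: "th > 1" using D1 by simp

lemma irr_eq:
  assumes "of_rat p + of_rat q * th = of_rat p' + of_rat q' * th"
  shows "p = p' \<and> q = q'"
proof (cases "q = q'")
  case True then show ?thesis using assms by simp
next
  case False
  hence "th = of_rat ((p - p') / (q' - q))" using assms
    by (simp add: of_rat_divide of_rat_diff field_simps)
  hence "th \<in> \<rat>" by simp
  with sqrt_irr[OF D1 sqf] show ?thesis by simp
qed

lemma qconj_rat: "qconj D (of_rat p + of_rat q * th) = of_rat p - of_rat q * th"
  unfolding qconj_def
proof (rule the_equality)
  show "\<exists>a b. of_rat p + of_rat q * th = of_rat a + of_rat b * th \<and> of_rat p - of_rat q * th = of_rat a - of_rat b * th"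
    by blast
next
  fix y assume "\<exists>a b. of_rat p + of_rat q * th = of_rat a + of_rat b * th \<and> y = of_rat a - of_rat b * th"
  then obtain a b where "of_rat p + of_rat q * th = of_rat a + of_rat b * th" "y = of_rat a - of_rat b * th" by blast
  with irr_eq show "y = of_rat p - of_rat q * th" by blast
qed

lemma qconj_int: "qconj D ((of_int a + of_int b * th) / 2) = (of_int a - of_int b * th) / 2"
proof -
  have e1: "(of_int a + of_int b * th) / 2 = of_rat (of_int a / 2) + of_rat (of_int b / 2) * th"
    by (simp add: of_rat_divide field_simps)
  have "qconj D ((of_int a + of_int b * th) / 2) = of_rat (of_int a / 2) - of_rat (of_int b / 2) * th"
    unfolding e1 by (rule qconj_rat)
  also have "\<dots> = (of_int a - of_int b * th) / 2" by (simp add: of_rat_divide field_simps)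
  finally show ?thesis .
qed

definition cnd :: "int \<Rightarrow> int \<Rightarrow> bool" where
  "cnd a b \<longleftrightarrow> (if D mod 4 = 1 then a mod 2 = b mod 2 else even a \<and> even b)"

lemma in_OD_iff: "in_OD D x \<longleftrightarrow> (\<exists>a b. x = (of_int a + of_int b * th) / 2 \<and> cnd a b)"
  unfolding in_OD_def cnd_def by blast

lemma OD_rat: assumes "in_OD D x" shows "\<exists>p q. x = of_rat p + of_rat q * th"
proof -
  obtain a b where "x = (of_int a + of_int b * th) / 2" using assms in_OD_iff by blast
  hence "x = of_rat (of_int a / 2) + of_rat (of_int b / 2) * th" by (simp add: of_rat_divide field_simps)
  thus ?thesis by blast
qed

lemma qconj_mult_rat:
  "qconj D ((of_rat p + of_rat q * th) * (of_rat p' + of_rat q' * th)) =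
   qconj D (of_rat p + of_rat q * th) * qconj D (of_rat p' + of_rat q' * th)"
proof -
  have "(of_rat p + of_rat q * th) * (of_rat p' + of_rat q' * th) =
        of_rat (p * p' + of_int D * q * q') + of_rat (p * q' + q * p') * th"
    using th_sq by (simp add: of_rat_add of_rat_mult algebra_simps)
  moreover have "(of_rat p - of_rat q * th) * (of_rat p' - of_rat q' * th) =
        of_rat (p * p' + of_int D * q * q') - of_rat (p * q' + q * p') * th"
    using th_sq by (simp add: of_rat_add of_rat_mult algebra_simps)
  ultimately show ?thesis using qconj_rat by simp
qed

lemma qconj_mult: assumes "in_OD D x" "in_OD D y" shows "qconj D (x * y) = qconj D x * qconj D y"
  using OD_rat[OF assms(1)] OD_rat[OF assms(2)] qconj_mult_rat by auto

lemma OD_mult: assumes "in_OD D x" "in_OD D y" shows "in_OD D (x * y)"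
proof -
  obtain a b where x: "x = (of_int a + of_int b * th) / 2" and cx: "cnd a b" using assms(1) in_OD_iff by blast
  obtain c d where y: "y = (of_int c + of_int d * th) / 2" and cy: "cnd c d" using assms(2) in_OD_iff by blast
  have xy: "x * y = (of_int (a*c + D*b*d) + of_int (a*d+b*c) * th) / 4"
    unfolding x y using th_sq by (simp add: algebra_simps)
  show ?thesis
  proof (cases "D mod 4 = 1")
    case True
    obtain j where j: "D = 4*j+1" using True by (metis div_mult_mod_eq add.commute mult.commute)
    obtain e where e: "a = b + 2*e" using cx True unfolding cnd_def
      by (metis add.commute mod_eq_dvd_iff dvd_def eq_diff_eq)
    obtain f where f: "c = d + 2*f" using cy True unfolding cnd_def
      by (metis add.commute mod_eq_dvd_iff dvd_def eq_diff_eq)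
    define A where "A = b*d + b*f + e*d + 2*e*f + 2*j*b*d"
    define B where "B = b*d + e*d + b*f"
    have A2: "a*c + D*b*d = 2*A" unfolding A_def j e f by (simp add: algebra_simps)
    have B2: "a*d + b*c = 2*B" unfolding B_def e f by (simp add: algebra_simps)
    have "A - B = 2*(e*f + j*b*d)" unfolding A_def B_def by (simp add: algebra_simps)
    hence "A mod 2 = B mod 2" by (metis mod_eq_dvd_iff dvd_triv_left)
    hence "cnd A B" using True unfolding cnd_def by simp
    moreover have "x * y = (of_int A + of_int B * th) / 2"
      unfolding xy using arg_cong[OF A2, of real_of_int] arg_cong[OF B2, of real_of_int]
      by (simp add: field_simps)
    ultimately show ?thesis using in_OD_iff by blast
  next
    case False
    obtain a' b' where ab: "a = 2*a'" "b = 2*b'" using cx False unfolding cnd_def by (auto elim!: evenE)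
    obtain c' d' where cd: "c = 2*c'" "d = 2*d'" using cy False unfolding cnd_def by (auto elim!: evenE)
    have "cnd (2*(a'*c' + D*b'*d')) (2*(a'*d'+b'*c'))" using False unfolding cnd_def by simp
    moreover have "x * y = (of_int (2*(a'*c' + D*b'*d')) + of_int (2*(a'*d'+b'*c')) * th) / 2"
      unfolding xy ab cd by (simp add: field_simps)
    ultimately show ?thesis using in_OD_iff by blast
  qed
qed


lemma OD_one: "in_OD D 1"
proof -
  have "cnd 2 0" unfolding cnd_def by simp
  moreover have "(1::real) = (of_int 2 + of_int 0 * th) / 2" by simp
  ultimately show ?thesis using in_OD_iff by blast
qed

lemma qconj_one: "qconj D 1 = 1"
  using qconj_int[of 2 0] by simp

lemma OD_pow: "in_OD D x \<Longrightarrow> in_OD D (x ^ n)"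
  by (induction n) (auto simp: OD_one OD_mult)

lemma qconj_pow: "in_OD D x \<Longrightarrow> qconj D (x ^ n) = qconj D x ^ n"
  by (induction n) (auto simp: qconj_one qconj_mult OD_pow)

lemma cnd_neg: "cnd a b \<Longrightarrow> cnd (-a) (-b)" unfolding cnd_def by (auto; presburger)
lemma cnd_conj: "cnd a b \<Longrightarrow> cnd a (-b)" unfolding cnd_def by (auto; presburger)

lemma OD_rep: assumes "in_OD D x"
  obtains a b where "x = (of_int a + of_int b * th) / 2" "cnd a b"
    "qconj D x = (of_int a - of_int b * th) / 2"
    "qnorm D x = of_int (a^2 - D*b^2) / 4" "4 dvd a^2 - D*b^2"
proof -
  obtain a b where x: "x = (of_int a + of_int b * th) / 2" and c: "cnd a b" using assms in_OD_iff by blast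
  have q: "qconj D x = (of_int a - of_int b * th) / 2" unfolding x by (rule qconj_int)
  have "qnorm D x = ((of_int a + of_int b * th) / 2) * ((of_int a - of_int b * th) / 2)"
    unfolding qnorm_def by (subst q, subst (1) x, rule refl)
  also have "\<dots> = of_int (a^2 - D*b^2) / 4" using th_sq
    by (simp add: field_simps power2_eq_square)
  finally have n: "qnorm D x = of_int (a^2 - D*b^2) / 4" .
  have "4 dvd a^2 - D*b^2"
  proof (cases "D mod 4 = 1")
    case True
    obtain j where j: "D = 4*j+1" using True by (metis div_mult_mod_eq add.commute mult.commute)
    obtain e where e: "a = b + 2*e" using c True unfolding cnd_def
      by (metis add.commute mod_eq_dvd_iff dvd_def eq_diff_eq)
    have "a^2 - D*b^2 = 4 * (b*e + e*e - j*b*b)" unfolding e j by (simp add: algebra_simps power2_eq_square)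
    thus ?thesis by simp
  next
    case False
    obtain a' b' where ab: "a = 2*a'" "b = 2*b'" using c False unfolding cnd_def by (auto elim!: evenE)
    have "a^2 - D*b^2 = 4 * (a'^2 - D*b'^2)" unfolding ab by (simp add: algebra_simps power2_eq_square)
    thus ?thesis by simp
  qed
  with that x c q n show ?thesis by blast
qed

lemma OD_conj: assumes "in_OD D x" shows "in_OD D (qconj D x)"
proof -
  obtain a b where "cnd a b" "qconj D x = (of_int a - of_int b * th) / 2" using OD_rep[OF assms] by metis
  hence "qconj D x = (of_int a + of_int (-b) * th) / 2" "cnd a (-b)" using cnd_conj by auto
  thus ?thesis using in_OD_iff by blast
qed

lemma OD_neg: assumes "in_OD D x" shows "in_OD D (- x)"
proof -
  obtain a b where "cnd a b" "x = (of_int a + of_int b * th) / 2" using OD_rep[OF assms] by metis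
  hence "- x = (of_int (-a) + of_int (-b) * th) / 2" "cnd (-a) (-b)" using cnd_neg by (auto simp: field_simps)
  thus ?thesis using in_OD_iff by blast
qed

lemma qnorm_int: assumes "in_OD D x" shows "\<exists>N::int. qnorm D x = of_int N"
proof -
  obtain a b where "qnorm D x = of_int (a^2 - D*b^2) / 4" "4 dvd a^2 - D*b^2" using OD_rep[OF assms] by metis
  moreover then obtain k where "a^2 - D*b^2 = 4*k" by blast
  ultimately have "qnorm D x = of_int k" by simp
  thus ?thesis by blast
qed

lemma qnorm_mult: "in_OD D x \<Longrightarrow> in_OD D y \<Longrightarrow> qnorm D (x*y) = qnorm D x * qnorm D y"
  unfolding qnorm_def by (simp add: qconj_mult)

lemma qnorm_pow: "in_OD D x \<Longrightarrow> qnorm D (x^n) = qnorm D x ^ n"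
  unfolding qnorm_def by (simp add: qconj_pow power_mult_distrib)

lemma unit_iff: "unit_OD D x \<longleftrightarrow> in_OD D x \<and> (qnorm D x = 1 \<or> qnorm D x = -1)"
proof
  assume u: "unit_OD D x"
  hence o1: "in_OD D x" and o2: "in_OD D (inverse x)" and nz: "x \<noteq> 0" unfolding unit_OD_def by auto
  have "qnorm D x * qnorm D (inverse x) = qnorm D 1"
    using qnorm_mult[OF o1 o2] nz by simp
  also have "\<dots> = 1" unfolding qnorm_def qconj_one by simp
  finally have e: "qnorm D x * qnorm D (inverse x) = 1" .
  obtain N1 where N1: "qnorm D x = of_int N1" using qnorm_int[OF o1] by blast
  obtain N2 where N2: "qnorm D (inverse x) = of_int N2" using qnorm_int[OF o2] by blast
  have "N1 * N2 = 1" using e N1 N2 by (metis of_int_eq_1_iff of_int_mult)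
  hence "N1 = 1 \<or> N1 = -1" using zmult_eq_1_iff by blast
  with o1 N1 show "in_OD D x \<and> (qnorm D x = 1 \<or> qnorm D x = -1)" by auto
next
  assume a: "in_OD D x \<and> (qnorm D x = 1 \<or> qnorm D x = -1)"
  hence o1: "in_OD D x" by simp
  define N where "N = qnorm D x"
  have N2: "N * N = 1" using a N_def by auto
  have nz: "x \<noteq> 0" using a unfolding qnorm_def by auto
  have "x * (N * qconj D x) = N * N" unfolding N_def qnorm_def by simp
  hence inv: "inverse x = N * qconj D x" using N2 nz by (metis inverse_unique)
  have "in_OD D (N * qconj D x)"
    using a OD_conj[OF o1] OD_neg[OF OD_conj[OF o1]] N_def by auto
  with inv o1 nz show "unit_OD D x" unfolding unit_OD_def by simp
qed

lemma unit_mult: "unit_OD D x \<Longrightarrow> unit_OD D y \<Longrightarrow> unit_OD D (x*y)"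
  unfolding unit_OD_def by (auto simp: OD_mult)

lemma unit_inverse: "unit_OD D x \<Longrightarrow> unit_OD D (inverse x)"
  unfolding unit_OD_def by auto

lemma unit_one: "unit_OD D 1"
  unfolding unit_OD_def by (simp add: OD_one)

lemma unit_pow: "unit_OD D x \<Longrightarrow> unit_OD D (x^n)"
  by (induction n) (auto simp: unit_one unit_mult)

lemma unit_gt1_rep: assumes u: "unit_OD D u" and g: "u > 1"
  obtains a b where "u = (of_int a + of_int b * th) / 2" "cnd a b" "a \<ge> 1" "b \<ge> 1"
    "qconj D u = (of_int a - of_int b * th) / 2" "of_int (a^2 - D*b^2) = 4 * qnorm D u"
proof -
  have o: "in_OD D u" and n: "qnorm D u = 1 \<or> qnorm D u = -1" using u unit_iff by auto
  obtain a b where x: "u = (of_int a + of_int b * th) / 2" and c: "cnd a b" and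
    q: "qconj D u = (of_int a - of_int b * th) / 2" and nn: "qnorm D u = of_int (a^2 - D*b^2) / 4"
    using OD_rep[OF o] by metis
  have "u * qconj D u = 1 \<or> u * qconj D u = -1" using n unfolding qnorm_def .
  hence "qconj D u = 1 / u \<or> qconj D u = - 1 / u" using g by (auto simp: field_simps)
  hence lt: "\<bar>qconj D u\<bar> < 1" using g by auto
  have "of_int a = u + qconj D u" using x q by simp
  hence "real_of_int a > 0" using lt g by linarith
  hence a1: "a \<ge> 1" by simp
  have "of_int b * th = u - qconj D u" using x q by simp
  hence "real_of_int b * th > 0" using lt g by linarith
  hence "real_of_int b > 0" using th_gt1 by (simp add: zero_less_mult_iff)
  hence b1: "b \<ge> 1" by simp
  show ?thesis using that[OF x c a1 b1 q] nn by simp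
qed

end



context fixes D :: int assumes D1: "D > 1" and sqf: "squarefree D"
begin

abbreviation "th2 \<equiv> sqrt (real_of_int D)"

lemma pell: "\<exists>X Y :: int. X^2 - D*Y^2 = 1 \<and> Y \<noteq> 0"
proof -
  have irr: "th2 \<notin> \<rat>" using sqrt_irr[OF D1 sqf] .
  have thgt: "th2 > 1" using D1 by simp
  have thsq: "th2 * th2 = real_of_int D" using D1 by simp
  define B where "B = {(h::int,k::int). k > 0 \<and> \<bar>of_int k * th2 - of_int h\<bar> < 1 / of_int k}"
  have ex: "\<exists>p\<in>B. \<bar>of_int (snd p) * th2 - of_int (fst p)\<bar> < 1 / real N" if N: "N > 0" for N :: nat
  proof -
    obtain h k where k: "0 < k" "k \<le> int N" and a: "\<bar>of_int k * th2 - of_int h\<bar> < 1/N"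
      using Dirichlet_approx[OF N] by blast
    have "1 / real N \<le> 1 / of_int k" using k by (simp add: frac_le)
    with a k have "(h,k) \<in> B" unfolding B_def by auto
    with a show ?thesis by force
  qed
  have pos: "\<bar>of_int k * th2 - of_int h\<bar> > 0" if "k > 0" for h k :: int
  proof (rule ccontr)
    assume "\<not> ?thesis"
    hence "th2 = of_int h / of_int k" using that by (simp add: field_simps)
    hence "th2 \<in> \<rat>" by simp
    with irr show False by simp
  qed
  have infB: "infinite B"
  proof
    assume fin: "finite B"
    define V where "V = (\<lambda>p. \<bar>of_int (snd p) * th2 - of_int (fst p)\<bar>) ` B"
    have finV: "finite V" using fin V_def by simp
    have neV: "V \<noteq> {}" using ex[of 1] V_def by auto
    have Vpos: "\<forall>v\<in>V. v > 0" using pos unfolding V_def B_def by auto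
    define \<delta> where "\<delta> = Min V"
    have dpos: "\<delta> > 0" using Vpos finV neV \<delta>_def by simp
    obtain N :: nat where N: "inverse (real (Suc N)) < \<delta>" using dpos reals_Archimedean by blast
    obtain p where p: "p \<in> B" "\<bar>of_int (snd p) * th2 - of_int (fst p)\<bar> < 1 / real (Suc N)"
      using ex[of "Suc N"] by auto
    have "\<delta> \<le> \<bar>of_int (snd p) * th2 - of_int (fst p)\<bar>" using p(1) finV \<delta>_def V_def by simp
    with p(2) N show False by (simp add: inverse_eq_divide)
  qed
  have props: "fst p > 0 \<and> fst p ^ 2 - D * snd p ^ 2 \<noteq> 0 \<and> \<bar>fst p ^ 2 - D * snd p ^ 2\<bar> \<le> 2 * th2 + 1"
    if pB: "p \<in> B" for p
  proof -
    obtain h k where p: "p = (h,k)" by (cases p)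
    have k: "k > 0" and a: "\<bar>of_int k * th2 - of_int h\<bar> < 1 / of_int k" using pB p B_def by auto
    have k1: "real_of_int k \<ge> 1" using k by simp
    have "1 / real_of_int k \<le> 1" using k1 by simp
    have "of_int k * th2 \<ge> th2" using k1 thgt by simp
    have hpos: "real_of_int h > 0" using a \<open>1 / real_of_int k \<le> 1\<close> \<open>of_int k * th2 \<ge> th2\<close> thgt by linarith
    have eq: "real_of_int (h^2 - D*k^2) = (of_int h - of_int k * th2) * (of_int h + of_int k * th2)"
      using thsq by (simp add: algebra_simps power2_eq_square)
    have nz1: "of_int h - of_int k * th2 \<noteq> 0" using pos[OF k, of h] by auto
    have nz2: "of_int h + of_int k * th2 > 0" using hpos k thgt by (simp add: add_pos_pos)
    have "real_of_int (h^2 - D*k^2) \<noteq> 0" using eq nz1 nz2 by simp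
    hence nz: "h^2 - D*k^2 \<noteq> 0" by (metis of_int_0)
    have b1: "\<bar>of_int h - of_int k * th2\<bar> < 1 / of_int k" using a by (simp add: abs_minus_commute)
    have b2: "\<bar>of_int h + of_int k * th2\<bar> \<le> 1 / of_int k + 2 * of_int k * th2"
    proof -
      have nn: "0 \<le> 2 * real_of_int k * th2" using k thgt by simp
      have "\<bar>of_int h + of_int k * th2\<bar> = \<bar>(of_int h - of_int k * th2) + 2 * of_int k * th2\<bar>" by simp
      also have "\<dots> \<le> \<bar>of_int h - of_int k * th2\<bar> + \<bar>2 * of_int k * th2\<bar>" by (rule abs_triangle_ineq)
      finally show ?thesis using b1 nn by simp
    qed
    have "\<bar>real_of_int (h^2 - D*k^2)\<bar> \<le> (1 / of_int k) * (1 / of_int k + 2 * of_int k * th2)"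
      unfolding eq abs_mult by (rule mult_mono) (use b1 b2 k in auto)
    also have "\<dots> = 1 / (of_int k)^2 + 2 * th2" using k by (simp add: field_simps power2_eq_square)
    also have "\<dots> \<le> 1 + 2 * th2" using k1 by (simp add: power_le_one_iff field_simps)
    finally have "\<bar>real_of_int (h^2 - D*k^2)\<bar> \<le> 2 * th2 + 1" by simp
    thus ?thesis using p hpos nz by simp
  qed
  define M where "M = \<lceil>2 * th2 + 1\<rceil>"
  define \<phi> where "\<phi> = (\<lambda>p::int\<times>int. let m = fst p ^ 2 - D * snd p ^ 2 in (m, fst p mod m, snd p mod m))"
  have "\<phi> ` B \<subseteq> {-M..M} \<times> {-M..M} \<times> {-M..M}"
  proof
    fix z assume "z \<in> \<phi> ` B"
    then obtain p where pB: "p \<in> B" and z: "z = \<phi> p" by blast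
    define m where "m = fst p ^ 2 - D * snd p ^ 2"
    have mnz: "m \<noteq> 0" and r: "real_of_int \<bar>m\<bar> \<le> 2 * th2 + 1" using props[OF pB] m_def
      by auto
    have "real_of_int \<bar>m\<bar> \<le> of_int M" unfolding M_def using r le_of_int_ceiling order_trans by blast
    hence mb: "\<bar>m\<bar> \<le> M" by linarith
    have "\<bar>fst p mod m\<bar> < \<bar>m\<bar>" "\<bar>snd p mod m\<bar> < \<bar>m\<bar>" using abs_mod_less mnz by auto
    thus "z \<in> {-M..M} \<times> {-M..M} \<times> {-M..M}" using z mb unfolding \<phi>_def m_def[symmetric] Let_def
      by auto
  qed
  hence "finite (\<phi> ` B)" by (rule finite_subset) simp
  from pigeonhole_infinite[OF infB this] obtain a0 where a0: "a0 \<in> B"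
    and inf: "infinite {a \<in> B. \<phi> a = \<phi> a0}" by blast
  have "{a \<in> B. \<phi> a = \<phi> a0} - {a0} \<noteq> {}"
  proof
    assume "{a \<in> B. \<phi> a = \<phi> a0} - {a0} = {}"
    hence "{a \<in> B. \<phi> a = \<phi> a0} \<subseteq> {a0}" by blast
    with inf show False using finite_subset by blast
  qed
  then obtain a1 where a1: "a1 \<in> B" "\<phi> a1 = \<phi> a0" "a1 \<noteq> a0" by blast
  obtain h1 k1 where p1: "a0 = (h1,k1)" by (cases a0)
  obtain h2 k2 where p2: "a1 = (h2,k2)" by (cases a1)
  define m where "m = h1^2 - D*k1^2"
  have m2: "m = h2^2 - D*k2^2" and hm: "h2 mod m = h1 mod m" and km: "k2 mod m = k1 mod m"
    using a1(2) unfolding \<phi>_def p1 p2 m_def Let_def by auto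
  have mnz: "m \<noteq> 0" and h1p: "h1 > 0" using props[OF a0] p1 m_def by auto
  have h2p: "h2 > 0" using props[OF a1(1)] p2 by auto
  obtain s where s: "h2 = h1 + m * s" using hm by (metis mod_eq_dvd_iff dvdE add_diff_cancel_left' diff_add_cancel)
  obtain t where t: "k2 = k1 + m * t" using km by (metis mod_eq_dvd_iff dvdE add_diff_cancel_left' diff_add_cancel)
  define X where "X = 1 + h1 * s - D * k1 * t"
  define Y where "Y = k1 * s - h1 * t"
  have X0: "h1*h2 - D*k1*k2 = m * X" unfolding X_def s t m_def by (simp add: algebra_simps power2_eq_square)
  have Y0: "k1*h2 - h1*k2 = m * Y" unfolding Y_def s t m_def by (simp add: algebra_simps power2_eq_square)
  have brah: "(h1*h2 - D*k1*k2)^2 - D*(k1*h2 - h1*k2)^2 = (h1^2 - D*k1^2) * (h2^2 - D*k2^2)"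
    by (simp add: algebra_simps power2_eq_square)
  hence "m^2 * (X^2 - D*Y^2) = m^2 * 1" unfolding X0 Y0 m2[symmetric] m_def[symmetric]
    by (simp add: algebra_simps power2_eq_square)
  hence XY: "X^2 - D*Y^2 = 1" using mnz by simp
  have "Y \<noteq> 0"
  proof
    assume "Y = 0"
    hence kh: "k1*h2 = h1*k2" using Y0 by simp
    have "h1^2 * (h2^2 - D*k2^2) - h2^2 * (h1^2 - D*k1^2) = D * ((k1*h2)^2 - (h1*k2)^2)"
      by (simp add: algebra_simps power2_eq_square)
    hence "h1^2 * m = h2^2 * m" using kh m2 m_def by simp
    hence "h1^2 = h2^2" using mnz by simp
    hence "h1 = h2" using h1p h2p by (simp add: power2_eq_iff)
    with kh h1p have "k1 = k2" by simp
    with \<open>h1 = h2\<close> a1(3) p1 p2 show False by simp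
  qed
  with XY show ?thesis by blast
qed

end



context fixes D :: int assumes D1: "D > 1" and sqf: "squarefree D"
begin

abbreviation "th3 \<equiv> sqrt (real_of_int D)"

lemma exists_unit_gt1: "\<exists>u. unit_OD D u \<and> u > 1"
proof -
  obtain X Y :: int where XY: "X^2 - D*Y^2 = 1" and Y: "Y \<noteq> 0" using pell[OF D1 sqf] by blast
  define u where "u = \<bar>real_of_int X\<bar> + \<bar>real_of_int Y\<bar> * th3"
  have u2: "u = (of_int (2*\<bar>X\<bar>) + of_int (2*\<bar>Y\<bar>) * th3) / 2" by (simp add: u_def)
  have c: "cnd D (2*\<bar>X\<bar>) (2*\<bar>Y\<bar>)" by (simp add: cnd_def[OF D1 sqf])
  have o: "in_OD D u" using c in_OD_iff[OF D1 sqf] u2 by blast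
  have "qconj D u = (of_int (2*\<bar>X\<bar>) - of_int (2*\<bar>Y\<bar>) * th3) / 2"
    unfolding u2 by (rule qconj_int[OF D1 sqf])
  hence q: "qconj D u = \<bar>real_of_int X\<bar> - \<bar>real_of_int Y\<bar> * th3" by simp
  have "qnorm D u = (\<bar>real_of_int X\<bar> + \<bar>real_of_int Y\<bar> * th3) * (\<bar>real_of_int X\<bar> - \<bar>real_of_int Y\<bar> * th3)"
    unfolding qnorm_def q by (simp add: u_def)
  also have "\<dots> = (\<bar>of_int X\<bar> * \<bar>of_int X\<bar>) - (\<bar>of_int Y\<bar> * \<bar>of_int Y\<bar>) * (th3 * th3)"
    by algebra
  also have "\<dots> = of_int (X^2 - D*Y^2)" using D1 by (simp only: abs_mult_self_eq) (simp add: power2_eq_square)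
  finally have "qnorm D u = of_int (X^2 - D*Y^2)" .
  hence n: "qnorm D u = 1" using XY by simp
  have Y1: "\<bar>real_of_int Y\<bar> \<ge> 1" using Y by linarith
  have th: "th3 > 1" using D1 by simp
  have "\<bar>real_of_int Y\<bar> * th3 \<ge> 1 * th3" by (rule mult_right_mono) (use Y1 th in auto)
  hence "u > 1" unfolding u_def using th abs_ge_zero[of "real_of_int X"] by linarith
  with o n show ?thesis using unit_iff[OF D1 sqf] by blast
qed

lemma fund_props: "unit_OD D (fund_unit D) \<and> fund_unit D > 1 \<and>
  (\<forall>v. unit_OD D v \<and> v > 1 \<longrightarrow> fund_unit D \<le> v)"
proof -
  define S where "S = {u. unit_OD D u \<and> u > 1}"
  obtain u0 where u0: "u0 \<in> S" using exists_unit_gt1 S_def by blast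
  define T where "T = S \<inter> {..u0}"
  define K where "K = \<lceil>2 * u0\<rceil>"
  have "T \<subseteq> (\<lambda>(a,b). (of_int a + of_int b * th3) / 2) ` ({1..K} \<times> {1..K})"
  proof
    fix u assume "u \<in> T"
    hence u: "unit_OD D u" "u > 1" "u \<le> u0" unfolding T_def S_def by auto
    obtain a b where ab: "u = (of_int a + of_int b * th3) / 2" "a \<ge> 1" "b \<ge> 1"
      using unit_gt1_rep[OF D1 sqf u(1,2)] by metis
    have thg: "th3 > 1" using D1 by simp
    have "real_of_int b \<le> of_int b * th3" using ab(3) thg by simp
    moreover have "of_int b * th3 \<ge> 0" using ab(3) thg by simp
    moreover have "of_int a + of_int b * th3 \<le> 2 * u0" using ab(1) u(3) by simp
    ultimately have "real_of_int a \<le> 2 * u0" "real_of_int b \<le> 2 * u0" using ab(2) by linarith+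
    hence "a \<le> K" "b \<le> K" unfolding K_def by (meson ceiling_mono ceiling_of_int order_trans le_of_int_ceiling of_int_le_iff)+
    with ab show "u \<in> (\<lambda>(a,b). (of_int a + of_int b * th3) / 2) ` ({1..K} \<times> {1..K})" by force
  qed
  hence finT: "finite T" by (rule finite_subset) simp
  have u0T: "u0 \<in> T" using u0 T_def by simp
  define m where "m = Min T"
  have mT: "m \<in> T" using finT u0T m_def by (metis Min_in empty_iff)
  have mle: "\<forall>v\<in>S. m \<le> v"
  proof
    fix v assume v: "v \<in> S"
    show "m \<le> v"
    proof (cases "v \<le> u0")
      case True hence "v \<in> T" using v T_def by simp
      thus ?thesis using finT m_def by simp
    next
      case False
      have "m \<le> u0" using finT u0T m_def by simp
      thus ?thesis using False by simp
    qed
  qed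
  have "fund_unit D = m" unfolding fund_unit_def
    by (rule Least_equality) (use mT mle in \<open>auto simp: T_def S_def\<close>)
  thus ?thesis using mT mle unfolding T_def S_def by auto
qed

lemma unit_is_pow: assumes u: "unit_OD D u" and g: "u > 1"
  shows "\<exists>n\<ge>1. u = fund_unit D ^ n"
proof -
  define e where "e = fund_unit D"
  have ue: "unit_OD D e" and eg: "e > 1" and emin: "\<And>v. unit_OD D v \<Longrightarrow> v > 1 \<Longrightarrow> e \<le> v"
    using fund_props e_def by auto
  obtain N where "u < e ^ N" using real_arch_pow[OF eg] by blast
  define n0 where "n0 = (LEAST n. u < e ^ n)"
  have n0: "u < e ^ n0" using \<open>u < e ^ N\<close> n0_def by (metis LeastI)
  have "n0 \<noteq> 0"
  proof
    assume "n0 = 0" with n0 g show False by simp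
  qed
  then obtain n where n: "n0 = Suc n" by (cases n0) auto
  have "\<not> u < e ^ n" using n n0_def not_less_Least by (metis lessI)
  hence le: "e ^ n \<le> u" by simp
  have lt: "u < e ^ n * e" using n0 n by (simp add: mult.commute)
  define v where "v = u * inverse e ^ n"
  have epos: "e ^ n > 0" using eg by simp
  have vu: "unit_OD D v" unfolding v_def using u unit_pow[OF D1 sqf unit_inverse[OF D1 sqf ue]] unit_mult[OF D1 sqf] by blast
  have v1: "v \<ge> 1" unfolding v_def using le epos by (simp add: power_inverse field_simps)
  have v2: "v < e" unfolding v_def using lt epos by (simp add: power_inverse field_simps)
  have "v = 1"
  proof (rule ccontr)
    assume "v \<noteq> 1" hence "v > 1" using v1 by simp
    with emin[OF vu] v2 show False by simp
  qed
  hence "u = e ^ n" unfolding v_def using epos by (simp add: power_inverse field_simps)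
  moreover have "n \<ge> 1" using \<open>u = e ^ n\<close> g by (cases n) auto
  ultimately show ?thesis using e_def by blast
qed

end



context fixes D :: int assumes D1: "D > 1" and sqf: "squarefree D"
  and Nm: "qnorm D (fund_unit D) = -1"
begin

abbreviation "th4 \<equiv> sqrt (real_of_int D)"
definition "cc = (if D mod 4 = 1 then 1 else 2 :: int)"
definition "ll = (if D mod 4 = 1 then 4 else 1 :: int)"

lemma e_props: "unit_OD D (fund_unit D)" "fund_unit D > 1" "in_OD D (fund_unit D)"
  using fund_props[OF D1 sqf] unfolding unit_OD_def by auto

lemma sqrt_qD: "sqrt (real_of_int (qD D)) = of_int cc * th4"
  unfolding qD_def cc_def by (auto simp: real_sqrt_mult)

lemma qconj_e: "qconj D (fund_unit D) = - inverse (fund_unit D)"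
proof -
  have "fund_unit D * qconj D (fund_unit D) = -1" using Nm unfolding qnorm_def .
  thus ?thesis using e_props(2) by (simp add: field_simps)
qed

lemma F_eq: assumes "fund_unit D ^ m = (of_int a + of_int b * th4) / 2"
  shows "F_D D m = of_int b / of_int cc"
proof -
  have "qconj D (fund_unit D) ^ m = qconj D (fund_unit D ^ m)"
    using qconj_pow[OF D1 sqf e_props(3)] by simp
  also have "\<dots> = (of_int a - of_int b * th4) / 2" unfolding assms by (rule qconj_int[OF D1 sqf])
  finally have q: "qconj D (fund_unit D) ^ m = (of_int a - of_int b * th4) / 2" .
  have th: "th4 > 0" using D1 by simp
  have cc: "real_of_int cc > 0" unfolding cc_def by simp
  show ?thesis unfolding F_D_def sqrt_qD q assms using th cc by (simp add: field_simps)
qed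

lemma back_lem: assumes m: "m \<ge> 1"
  shows "\<exists>x y :: int. x > 0 \<and> y > 0 \<and> F_D D m = of_int x \<and> y^2 - D*x^2 = (-1)^m * ll"
proof -
  define u where "u = fund_unit D ^ m"
  have uu: "unit_OD D u" unfolding u_def using unit_pow[OF D1 sqf e_props(1)] .
  have ug: "u > 1" unfolding u_def using e_props(2) m by simp
  obtain a b where ab: "u = (of_int a + of_int b * th4) / 2" "cnd D a b" "a \<ge> 1" "b \<ge> 1"
     "of_int (a^2 - D*b^2) = 4 * qnorm D u" using unit_gt1_rep[OF D1 sqf uu ug] by metis
  have "qnorm D u = (-1)^m" unfolding u_def using qnorm_pow[OF D1 sqf e_props(3)] Nm by simp
  hence "real_of_int (a^2 - D*b^2) = of_int (4 * (-1)^m)" using ab(5) by simp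
  hence nab: "a^2 - D*b^2 = 4 * (-1)^m" by (simp only: of_int_eq_iff)
  have F: "F_D D m = of_int b / of_int cc" using F_eq ab(1) u_def by simp
  show ?thesis
  proof (cases "D mod 4 = 1")
    case True
    hence "F_D D m = of_int b" "ll = 4" using F cc_def ll_def by auto
    thus ?thesis using nab ab by (intro exI[of _ b] exI[of _ a]) auto
  next
    case False
    obtain a' b' where ab': "a = 2*a'" "b = 2*b'" using ab(2) False unfolding cnd_def[OF D1 sqf] by (auto elim!: evenE)
    have "F_D D m = of_int b'" "ll = 1" using F cc_def ll_def False ab' by auto
    moreover have "a'^2 - D*b'^2 = (-1)^m" using nab ab' by (simp add: power_mult_distrib algebra_simps)
    moreover have "a' > 0" "b' > 0" using ab ab' by auto
    ultimately show ?thesis by (intro exI[of _ b'] exI[of _ a']) auto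
  qed
qed

lemma fwd_lem: assumes x: "x > 0" and y: "y > 0" and sg: "\<sigma> = 1 \<or> \<sigma> = -1"
  and eq: "y^2 - D*x^2 = \<sigma> * ll"
  shows "\<exists>m\<ge>1. F_D D m = of_int x \<and> (-1)^m = \<sigma>"
proof -
  define a where "a = cc * y"
  define b where "b = cc * x"
  have c: "cnd D a b"
  proof (cases "D mod 4 = 1")
    case True
    obtain j where j: "D = 4*j+1" using True by (metis div_mult_mod_eq add.commute mult.commute)
    have l4: "ll = 4" using True ll_def by simp
    have e4: "y^2 - D*x^2 = \<sigma>*4" using eq l4 by simp
    have "(y - x) * (y + x) = (y^2 - D*x^2) + (D-1)*x^2" by (simp add: algebra_simps power2_eq_square)
    also have "\<dots> = \<sigma>*4 + (D-1)*x^2" using e4 by simp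
    also have "\<dots> = 2 * (2 * (\<sigma> + j * x^2))" using j by (simp add: algebra_simps)
    finally have "(y - x) * (y + x) = 2 * (2 * (\<sigma> + j * x^2))" .
    hence "even ((y - x) * (y + x))" by simp
    hence "even (y - x) \<or> even (y + x)" by simp
    hence "y mod 2 = x mod 2" by presburger
    thus ?thesis using True unfolding cnd_def[OF D1 sqf] a_def b_def cc_def by simp
  next
    case False thus ?thesis unfolding cnd_def[OF D1 sqf] a_def b_def cc_def by simp
  qed
  define u where "u = (of_int a + of_int b * th4) / 2"
  have o: "in_OD D u" using in_OD_iff[OF D1 sqf] c u_def by blast
  have q: "qconj D u = (of_int a - of_int b * th4) / 2" unfolding u_def by (rule qconj_int[OF D1 sqf])
  have "qnorm D u = ((of_int a + of_int b * th4) / 2) * ((of_int a - of_int b * th4) / 2)"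
    unfolding qnorm_def q by (simp add: u_def)
  also have "\<dots> = (of_int a * of_int a - of_int b * of_int b * (th4 * th4)) / 4" by (simp add: field_simps)
  also have "\<dots> = of_int (cc^2 * (y^2 - D*x^2)) / 4" using D1 unfolding a_def b_def
    by (simp add: algebra_simps power2_eq_square)
  also have "\<dots> = of_int \<sigma>" unfolding eq by (auto simp: cc_def ll_def)
  finally have nu: "qnorm D u = of_int \<sigma>" .
  have uu: "unit_OD D u" using unit_iff[OF D1 sqf] o nu sg by auto
  have "th4 > 1" using D1 by simp
  have "cc \<ge> 1" using cc_def by auto
  have "1*1 \<le> cc * y" "1*1 \<le> cc * x" by (rule mult_mono; use \<open>cc \<ge> 1\<close> x y in auto)+
  hence "a \<ge> 1" "b \<ge> 1" unfolding a_def b_def by simp_all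
  hence "real_of_int a \<ge> 1" "real_of_int b \<ge> 1" by simp_all
  hence "of_int b * th4 \<ge> 1 * th4" using \<open>th4 > 1\<close> by (intro mult_right_mono) auto
  hence "of_int b * th4 > 1" using \<open>th4 > 1\<close> by linarith
  hence ug: "u > 1" unfolding u_def using \<open>real_of_int a \<ge> 1\<close> by simp
  obtain m where m: "m \<ge> 1" "u = fund_unit D ^ m" using unit_is_pow[OF D1 sqf uu ug] by blast
  have "qnorm D u = (-1)^m" unfolding m(2) using qnorm_pow[OF D1 sqf e_props(3)] Nm by simp
  hence s: "(-1)^m = \<sigma>" using nu by (metis of_int_eq_iff of_int_minus of_int_1 of_int_power)
  have "fund_unit D ^ m = (of_int a + of_int b * th4) / 2" using m(2) u_def by simp
  hence "F_D D m = of_int b / of_int cc" by (rule F_eq)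
  hence "F_D D m = of_int x" unfolding b_def cc_def by auto
  with m s show ?thesis by blast
qed

end



lemma r1_sq: assumes "x \<noteq> 0" shows "r1 (x^2) = 2"
proof -
  have "{z::int. z^2 = x^2} = {x, -x}" by (auto simp: power2_eq_iff)
  moreover have "x \<noteq> -x" using assms by simp
  ultimately show ?thesis unfolding r1_def by simp
qed

lemma r1_nz: assumes "r1 n \<noteq> 0" shows "\<exists>x. x^2 = n"
proof (rule ccontr)
  assume "\<not> ?thesis"
  hence "{x::int. x^2 = n} = {}" by auto
  with assms show False unfolding r1_def by simp
qed

lemma powr_sq: assumes "x > 0"
  shows "complex_of_real (x^2) powr (s/2) = complex_of_real x powr s"
proof -
  have "x^2 > 0" using assms by simp
  have "complex_of_real (x^2) powr (s/2) = exp (s/2 * ln (complex_of_real (x^2)))"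
    using \<open>x^2 > 0\<close> by (simp add: powr_def)
  also have "ln (complex_of_real (x^2)) = complex_of_real (2 * ln x)"
    using \<open>x^2 > 0\<close> assms by (subst Ln_of_real) (auto simp: ln_realpow)
  also have "exp (s/2 * complex_of_real (2 * ln x)) = exp (s * ln (complex_of_real x))"
    using assms by (simp add: Ln_of_real)
  also have "\<dots> = complex_of_real x powr s" using assms by (simp add: powr_def)
  finally show ?thesis .
qed

context fixes D :: int assumes D1: "D > 1" and sqf: "squarefree D"
  and Nm: "qnorm D (fund_unit D) = -1"
begin

abbreviation "th5 \<equiv> sqrt (real_of_int D)"

lemma F_form: "F_D D m = (fund_unit D ^ m - (- inverse (fund_unit D)) ^ m) / (of_int (cc D) * th5)"
  unfolding F_D_def qconj_e[OF D1 sqf Nm] sqrt_qD[OF D1 sqf Nm] ..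

lemma cth_pos: "of_int (cc D) * th5 > 0"
  using D1 by (simp add: cc_def[OF D1 sqf Nm])

lemma F_mono: "F_D D m < F_D D (m + 2)"
proof -
  define e where "e = fund_unit D"
  define d where "d = inverse e"
  have e1: "e > 1" using e_props[OF D1 sqf Nm] e_def by simp
  have d0: "d > 0" "d < 1" using e1 d_def by (auto simp: inverse_less_1_iff)
  have ed: "e * d = 1" using e1 d_def by simp
  have A: "(-d)^m \<ge> -1"
  proof -
    have "\<bar>(-d)^m\<bar> = d^m" using d0 by (simp add: power_abs)
    also have "\<dots> \<le> 1" using d0 by (simp add: power_le_one)
    finally show ?thesis by linarith
  qed
  have B: "e^m \<ge> 1" using e1 by simp
  have C: "e^2 + d^2 > 2"
  proof -
    have "(e - d)^2 > 0" using e1 d0 by simp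
    thus ?thesis using ed by (simp add: power2_eq_square algebra_simps)
  qed
  have "e^m * (e^2 - 1) \<ge> 1 * (e^2 - 1)" using B e1 by (intro mult_right_mono) (auto simp: power2_eq_square less_1_mult less_imp_le)
  moreover have "(-d)^m * (1 - d^2) \<ge> (-1) * (1 - d^2)" using A d0
    by (intro mult_right_mono) (auto simp: power2_eq_square mult_le_one)
  ultimately have "1 * (e^2 - 1) + (-1) * (1 - d^2) \<le> e^m * (e^2 - 1) + (-d)^m * (1 - d^2)"
    by (rule add_mono)
  moreover have "1 * (e^2 - 1) + (-1) * (1 - d^2) > 0" using C by simp
  ultimately have "e^m * (e^2 - 1) + (-d)^m * (1 - d^2) > 0" by linarith
  hence "e^m - (-d)^m < e^m * e^2 - (-d)^m * d^2" by (simp add: algebra_simps)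
  moreover have p1: "e^(m+2) = e^m * e^2" by (rule power_add)
  moreover have p2: "(-d)^(m+2) = (-d)^m * d^2" by (simp only: power_add power2_minus)
  ultimately have "e^m - (-d)^m < e^(m+2) - (-d)^(m+2)" by (simp only:)
  thus ?thesis unfolding F_form e_def[symmetric] d_def[symmetric] using cth_pos
    by (simp add: divide_strict_right_mono)
qed

lemma F_lower: assumes m: "m \<ge> 1"
  shows "F_D D m \<ge> (1 - inverse (fund_unit D) ^ 2) / (of_int (cc D) * th5) * fund_unit D ^ m"
proof -
  define e where "e = fund_unit D"
  define d where "d = inverse e"
  have e1: "e > 1" using e_props[OF D1 sqf Nm] e_def by simp
  have d0: "d > 0" "d < 1" using e1 d_def by (auto simp: inverse_less_1_iff)
  have "(-d)^m \<le> d^2 * e^m"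
  proof (cases "m = 1")
    case True
    have "d^2 * e^m \<ge> 0" using d0 e1 by simp
    thus ?thesis using True d0 by simp
  next
    case False
    hence "m \<ge> 2" using m by simp
    have "(-d)^m \<le> \<bar>(-d)^m\<bar>" by (rule abs_ge_self)
    also have "\<dots> = d^m" using d0 by (simp add: power_abs)
    also have "\<dots> \<le> d^2" using d0 \<open>m \<ge> 2\<close> by (intro power_decreasing) auto
    also have "\<dots> \<le> d^2 * e^m" using mult_left_mono[of 1 "e^m" "d^2"] e1 by simp
    finally show ?thesis .
  qed
  hence "(1 - d^2) * e^m \<le> e^m - (-d)^m" by (simp add: algebra_simps)
  hence "(1 - d^2) * e^m / (of_int (cc D) * th5) \<le> (e^m - (-d)^m) / (of_int (cc D) * th5)"
    using cth_pos by (simp add: divide_right_mono)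
  thus ?thesis unfolding F_form e_def[symmetric] d_def[symmetric] by simp
qed

end



lemma pow_powr: "(e::real) > 0 \<Longrightarrow> (e ^ m) powr a = (e powr a) ^ m"
  by (simp add: powr_realpow[symmetric] powr_powr powr_power mult.commute)

context fixes D :: int assumes D1: "D > 1" and sqf: "squarefree D"
  and Nm: "qnorm D (fund_unit D) = -1"
begin

lemma summ: assumes s: "Re s > 0" and j: "j \<ge> 1"
  shows "summable (\<lambda>k. complex_of_real (F_D D (2*k+j)) powr (-s))"
proof -
  define e where "e = fund_unit D"
  define K where "K = (1 - inverse e ^ 2) / (of_int (cc D) * sqrt (real_of_int D))"
  define r where "r = e powr (- Re s)"
  have e1: "e > 1" using e_props[OF D1 sqf Nm] e_def by simp
  have "inverse e < 1" using e1 by (simp add: inverse_less_1_iff)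
  hence "inverse e ^ 2 < 1" using e1 by (simp add: power_less_one_iff)
  hence Kp: "K > 0" unfolding K_def using cth_pos[OF D1 sqf Nm] by simp
  have r0: "r > 0" "r < 1" unfolding r_def using e1 s by (auto intro: powr_less_one)
  have bnd: "norm (complex_of_real (F_D D (2*k+j)) powr (-s)) \<le> K powr (- Re s) * r^j * (r^2)^k" for k
  proof -
    define m where "m = 2*k+j"
    have m1: "m \<ge> 1" using j m_def by simp
    have Fl: "F_D D m \<ge> K * e^m" using F_lower[OF D1 sqf Nm m1] K_def e_def by simp
    have Kem: "K * e^m > 0" using Kp e1 by simp
    have "norm (complex_of_real (F_D D m) powr (-s)) = F_D D m powr (- Re s)"
      using Fl Kem by (subst norm_powr_real_powr) auto
    also have "\<dots> \<le> (K * e^m) powr (- Re s)" using s Fl Kem by (intro powr_mono2') auto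
    also have "\<dots> = K powr (- Re s) * (e^m) powr (- Re s)" using Kp e1 by (simp add: powr_mult)
    also have "(e^m) powr (- Re s) = r^m" unfolding r_def using e1 by (simp add: pow_powr)
    also have "r^m = r^j * (r^2)^k" unfolding m_def by (simp add: power_add power_mult)
    finally show ?thesis unfolding m_def by (simp add: mult.assoc)
  qed
  have "summable (\<lambda>k. K powr (- Re s) * r^j * (r^2)^k)"
    using r0 by (intro summable_mult summable_geometric) (simp add: power_less_one_iff abs_less_iff)
  thus ?thesis using bnd by (rule summable_comparison_test')
qed


lemma gen_sum: assumes s: "Re s > 0" and j: "j = 1 \<or> j = 2" and sg: "\<sigma> = (-1::int)^j"
  shows "(\<Sum>k. complex_of_real (F_D D (2*k+j)) powr (-s)) =
     1/4 * (\<Sum>n. of_nat (r1 (int (Suc n)) * r1 (D * int (Suc n) + \<sigma> * ll D)) / of_nat (Suc n) powr (s / 2))"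
proof -
  define g where "g = (\<lambda>k. complex_of_real (F_D D (2*k+j)) powr (-s))"
  define f where "f = (\<lambda>n. of_nat (r1 (int (Suc n)) * r1 (D * int (Suc n) + \<sigma> * ll D)) / of_nat (Suc n) powr (s / 2) :: complex)"
  define xo where "xo = (\<lambda>k. \<lfloor>F_D D (2*k+j)\<rfloor>)"
  have sgj: "\<sigma> = 1 \<or> \<sigma> = -1" using j sg by auto
  have Fx: "F_D D (2*k+j) = of_int (xo k) \<and> xo k > 0 \<and> (\<exists>y>0. y^2 - D * (xo k)^2 = \<sigma> * ll D)" for k
  proof -
    have "2*k+j \<ge> 1" using j by auto
    from back_lem[OF D1 sqf Nm this] obtain x y where xy: "x > 0" "y > 0" "F_D D (2*k+j) = of_int x"
      "y^2 - D*x^2 = (-1)^(2*k+j) * ll D" by blast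
    have "(-1::int)^(2*k+j) = \<sigma>" using sg by (simp add: power_add power_mult)
    with xy show ?thesis unfolding xo_def by auto
  qed
  have xmono: "xo k < xo (Suc k)" for k
  proof -
    have "F_D D (2*k+j) < F_D D (2*k+j+2)" by (rule F_mono[OF D1 sqf Nm])
    moreover have "2*k+j+2 = 2*Suc k + j" by simp
    ultimately have "real_of_int (xo k) < of_int (xo (Suc k))" using Fx[of k] Fx[of "Suc k"] by simp
    thus ?thesis by simp
  qed
  define h where "h = (\<lambda>k. nat ((xo k)^2) - 1)"
  have hS: "int (Suc (h k)) = (xo k)^2" for k
  proof -
    have "xo k \<ge> 1" using Fx[of k] by simp
    hence "(xo k)^2 \<ge> 1" by simp
    thus ?thesis unfolding h_def by simp
  qed
  have smono: "strict_mono h"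
    unfolding strict_mono_Suc_iff
  proof
    fix k
    have "xo k > 0" using Fx[of k] by simp
    hence "(xo k)^2 < (xo (Suc k))^2" using xmono[of k] by (intro power_strict_mono) auto
    hence "int (Suc (h k)) < int (Suc (h (Suc k)))" using hS by simp
    thus "h k < h (Suc k)" by simp
  qed
  have fh: "f (h k) = 4 * g k" for k
  proof -
    define x where "x = xo k"
    obtain y where y: "y > 0" "y^2 - D * x^2 = \<sigma> * ll D" using Fx[of k] x_def by blast
    have x0: "x > 0" using Fx[of k] x_def by simp
    have "r1 (int (Suc (h k))) = 2" using hS[of k] r1_sq[of x] x0 x_def by simp
    moreover have "D * int (Suc (h k)) + \<sigma> * ll D = y^2" using hS[of k] y x_def by simp
    hence "r1 (D * int (Suc (h k)) + \<sigma> * ll D) = 2" using r1_sq[of y] y by simp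
    moreover have "(of_nat (Suc (h k)) :: complex) = complex_of_real ((real_of_int x)^2)"
    proof -
      have "real (Suc (h k)) = real_of_int (int (Suc (h k)))" by simp
      also have "\<dots> = (real_of_int x)^2" using hS[of k] x_def by simp
      finally show ?thesis by (metis of_real_of_nat_eq)
    qed
    moreover have "complex_of_real ((real_of_int x)^2) powr (s/2) = complex_of_real (real_of_int x) powr s"
      using x0 by (intro powr_sq) simp
    moreover have "g k = inverse (complex_of_real (real_of_int x) powr s)"
      unfolding g_def using Fx[of k] x_def by (simp add: powr_minus)
    ultimately show ?thesis unfolding f_def by (simp add: field_simps)
  qed
  have zero: "f n = 0" if nr: "n \<notin> range h" for n
  proof (rule ccontr)
    assume fn: "f n \<noteq> 0"
    hence a1: "r1 (int (Suc n)) \<noteq> 0" and a2: "r1 (D * int (Suc n) + \<sigma> * ll D) \<noteq> 0"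
      unfolding f_def by auto
    obtain x0 where x0: "x0^2 = int (Suc n)" using r1_nz[OF a1] by blast
    obtain y0 where y0: "y0^2 = D * int (Suc n) + \<sigma> * ll D" using r1_nz[OF a2] by blast
    define x where "x = \<bar>x0\<bar>"
    define y where "y = \<bar>y0\<bar>"
    have xsq: "x^2 = int (Suc n)" using x0 x_def by simp
    have ysq: "y^2 = D * x^2 + \<sigma> * ll D" using y0 y_def xsq by simp
    have xp: "x > 0" using xsq x_def by (cases "x0 = 0") auto
    have "x^2 \<ge> 1" using xsq by simp
    hence Dx: "D * x^2 \<ge> D" using mult_left_mono[of 1 "x^2" D] D1 by simp
    have "y \<noteq> 0"
    proof
      assume "y = 0"
      hence "D * x^2 = - \<sigma> * ll D" using ysq by simp
      have llv: "ll D = (if D mod 4 = 1 then 4 else 1)" by (rule ll_def[OF D1 sqf Nm])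
      show False
      proof (cases "\<sigma> = 1")
        case True
        thus False using \<open>D * x^2 = - \<sigma> * ll D\<close> Dx D1 llv by (simp split: if_splits)
      next
        case False
        hence "\<sigma> = -1" using sgj by simp
        hence "D \<le> ll D" using \<open>D * x^2 = - \<sigma> * ll D\<close> Dx by simp
        thus False using llv D1 by (simp split: if_splits; presburger)
      qed
    qed
    hence yp: "y > 0" using y_def by simp
    have "y^2 - D*x^2 = \<sigma> * ll D" using ysq by simp
    from fwd_lem[OF D1 sqf Nm xp yp sgj this] obtain m where m: "m \<ge> 1" "F_D D m = of_int x"
      "(-1)^m = \<sigma>" by blast
    have "\<exists>k. m = 2*k+j"
    proof (cases "j = 1")
      case True
      have "odd m"
      proof (rule ccontr)
        assume "\<not> odd m" hence "(-1::int)^m = 1" by simp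
        with m(3) sg True show False by simp
      qed
      thus ?thesis using True by (metis oddE)
    next
      case False
      hence j2: "j = 2" using j by simp
      have "even m"
      proof (rule ccontr)
        assume "\<not> even m" hence "(-1::int)^m = -1" by simp
        with m(3) sg j2 show False by simp
      qed
      then obtain q where "m = 2*q" by (rule evenE)
      hence "m = 2*(q-1) + 2" using m(1) by simp
      thus ?thesis using j2 by blast
    qed
    then obtain k where k: "m = 2*k+j" by blast
    have "of_int (xo k) = (of_int x :: real)" using Fx[of k] m(2) k by simp
    hence "xo k = x" by simp
    hence "h k = n" unfolding h_def using xsq by simp
    with nr show False by auto
  qed
  have sg_: "g sums suminf g" using summ[OF s, of j] j g_def by (auto intro: summable_sums)
  hence "(\<lambda>k. f (h k)) sums (4 * suminf g)" unfolding fh by (rule sums_mult)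
  hence "f sums (4 * suminf g)" using sums_mono_reindex[of h f, OF smono zero] by blast
  hence "suminf f = 4 * suminf g" by (rule sums_unique[symmetric])
  thus ?thesis unfolding f_def[symmetric] g_def[symmetric] by simp
qed

end

theorem mainTheorem10:
  fixes D :: int and s :: complex and l :: int
  assumes "D > 1" and "squarefree D"
    and "qnorm D (fund_unit D) = -1"
    and "l = (if D mod 4 = 1 then 4 else 1)"
    and "Re s > 0"
  shows "summable (\<lambda>n. complex_of_real (F_D D (2 * Suc n - 1)) powr (- s)) \<and>
         summable (\<lambda>n. complex_of_real (F_D D (2 * Suc n)) powr (- s)) \<and>
         Z_odd D s = 1/4 * (\<Sum>n. of_nat (r1 (int (Suc n)) * r1 (D * int (Suc n) - l))
                                   / of_nat (Suc n) powr (s / 2)) \<and>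
         Z_even D s = 1/4 * (\<Sum>n. of_nat (r1 (int (Suc n)) * r1 (D * int (Suc n) + l))
                                   / of_nat (Suc n) powr (s / 2))"
proof -
  have llD: "ll D = l" using ll_def[OF assms(1,2,3)] assms(4) by simp
  have i1: "(\<lambda>n. complex_of_real (F_D D (2 * Suc n - 1)) powr (- s)) =
            (\<lambda>k. complex_of_real (F_D D (2*k+1)) powr (- s))" by simp
  have i2: "(\<lambda>n. complex_of_real (F_D D (2 * Suc n)) powr (- s)) =
            (\<lambda>k. complex_of_real (F_D D (2*k+2)) powr (- s))" by simp
  have S1: "summable (\<lambda>n. complex_of_real (F_D D (2 * Suc n - 1)) powr (- s))"
    unfolding i1 using summ[OF assms(1,2,3,5), of 1] by simp
  have S2: "summable (\<lambda>n. complex_of_real (F_D D (2 * Suc n)) powr (- s))"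
    unfolding i2 using summ[OF assms(1,2,3,5), of 2] by simp
  have E1: "Z_odd D s = 1/4 * (\<Sum>n. of_nat (r1 (int (Suc n)) * r1 (D * int (Suc n) - l))
                                   / of_nat (Suc n) powr (s / 2))"
    unfolding Z_odd_def i1 using gen_sum[OF assms(1,2,3,5), of 1 "-1"] llD by simp
  have E2: "Z_even D s = 1/4 * (\<Sum>n. of_nat (r1 (int (Suc n)) * r1 (D * int (Suc n) + l))
                                   / of_nat (Suc n) powr (s / 2))"
    unfolding Z_even_def i2 using gen_sum[OF assms(1,2,3,5), of 2 1] llD by simp
  show ?thesis using S1 S2 E1 E2 by blast
qed

end
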